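(* Fix $\lambda>0$, $\epsilon>0$, $L_{\max}>0$, a decoding error probability $\delta\in(0,0.5)$ and a channel gain $|h_{ab}|^2>0$. Let $X$ be an exponential random variable with mean $1/\lambda$ and, for $P_a>0$, note that $$\mathbb{E}\left[\ln(XP_a+1)-\frac{XP_a}{XP_a+1}\right]=f(P_a):=-\left[1+\left(1+\frac{\lambda}{P_a}\right)e^{\lambda/P_a}\,\mathrm{Ei}\left(-\frac{\lambda}{P_a}\right)\right].$$ For $L_1>0$ and $P_a>0$ let $$R(L_1,P_a)=\log_2\left(1+P_a|h_{ab}|^2\right)-\sqrt{\frac{1}{L_1}\left(1-\frac{1}{(1+P_a|h_{ab}|^2)^2}\right)}\,\frac{Q^{-1}(\delta)}{\ln 2}.$$ Consider maximizing $L_1 R(L_1,P_a)(1-\delta)$ over $L_1$ and $P_a$ subject to $L_1 f(P_a)\le 2\epsilon^2$ and $L_1\le L_{\max}$. Then, for a given $P_a$, the optimal number of channel uses is $$L_1^*=\min\left(L_{\max},\frac{2\epsilon^2}{f(P_a)}\right),$$ and the optimal transmit power is a solution of maximizing $L_1^* R(L_1^*,P_a)(1-\delta)$ over $P_a>0$.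
   Context: $\mathrm{Ei}(x)=-\int_{-x}^{\infty}\frac{e^{-t}}{t}\,dt$ is the exponential integral. $Q^{-1}$ is the inverse of the Gaussian Q-function. This is the single-antenna-adversary case ($M=1$): $L_1\left(\ln(XP_a+1)-\frac{XP_a}{XP_a+1}\right)$ is the Kullback–Leibler divergence between $L_1$ i.i.d. observations $\mathcal{CN}(0,1)$ and $\mathcal{CN}(0,P_aX+1)$ given channel gain $X$; $L_1$ is treated as a continuous variable.
   Formalization: For a given $P_a$, $L_1^*$ is optimal, and then the unique optimum, only when the maximum over $L_1$ is attained, that is, when $L_1^* R(L_1^*,P_a)$ is nonnegative. Apart from conventions, each condition added here is assumed in the paper as well or is needed for the statement above to hold. *)

theory Defs
  imports "HOL-Probability.Probability"
begin

text \<open>Exponential integral, Ei(x) = - integral from -x to infinity of exp(-t)/t dt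
  (used only for negative arguments, where the integral converges).\<close>
definition Ei :: "real \<Rightarrow> real" where
  "Ei x = - (LINT t:{-x..}|lborel. exp (- t) / t)"

definition Qfun :: "real \<Rightarrow> real" where
  "Qfun x = (LINT t:{x..}|lborel. std_normal_density t)"

definition Qinv :: "real \<Rightarrow> real" where
  "Qinv d = (THE x. Qfun x = d)"

definition fKL :: "real \<Rightarrow> real \<Rightarrow> real" where
  "fKL lam Pa = - (1 + (1 + lam / Pa) * exp (lam / Pa) * Ei (- lam / Pa))"

text \<open>Rate R(L1,Pa); g = |h_ab|^2, d = delta.\<close>
definition Rate :: "real \<Rightarrow> real \<Rightarrow> real \<Rightarrow> real \<Rightarrow> real" where
  "Rate g d L1 Pa = log 2 (1 + Pa * g)
     - sqrt ((1 / L1) * (1 - 1 / (1 + Pa * g)\<^sup>2)) * Qinv d / ln 2"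

definition obj :: "real \<Rightarrow> real \<Rightarrow> real \<Rightarrow> real \<Rightarrow> real" where
  "obj g d L1 Pa = L1 * Rate g d L1 Pa * (1 - d)"

definition feasible :: "real \<Rightarrow> real \<Rightarrow> real \<Rightarrow> real \<Rightarrow> real \<Rightarrow> bool" where
  "feasible lam eps Lmax L1 Pa \<longleftrightarrow>
     L1 > 0 \<and> Pa > 0 \<and> L1 * fKL lam Pa \<le> 2 * eps\<^sup>2 \<and> L1 \<le> Lmax"

definition Lstar :: "real \<Rightarrow> real \<Rightarrow> real \<Rightarrow> real \<Rightarrow> real" where
  "Lstar lam eps Lmax Pa = min Lmax (2 * eps\<^sup>2 / fKL lam Pa)"

end

theory Submission imports Defs "HOL-Real_Asymp.Real_Asymp" begin

lemma einterval_0_inf: "einterval 0 \<infinity> = {0<..}"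
  by (auto simp: einterval_def zero_ereal_def)

lemma D_bound:
  fixes l p x :: real assumes "l > 0" "p > 0" "x > 0"
  shows "\<bar>- l * exp (- l * x) * (1 - ln (1 + p * x)) - exp (- l * x) * (p / (1 + p * x))\<bar>
     \<le> (1 + p / l) * (l * exp (- x * l)) + p * (l * exp (- x * l) * x)"
proof -
  define e where "e = exp (- l * x)"
  define L where "L = ln (1 + p * x)"
  have e: "e > 0" unfolding e_def by simp
  have L0: "0 \<le> L" unfolding L_def using assms by simp
  have L1: "L \<le> p * x" unfolding L_def using assms by (simp add: ln_add_one_self_le_self)
  have q: "0 < p / (1 + p * x)" "p / (1 + p * x) \<le> p" using assms by (auto simp: field_simps add_pos_pos)
  have "\<bar>- l * e * (1 - L) - e * (p / (1 + p * x))\<bar> \<le> l * e * \<bar>1 - L\<bar> + e * (p / (1 + p * x))"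
  proof -
    have "\<bar>- l * e * (1 - L)\<bar> = l * e * \<bar>1 - L\<bar>" using e assms by (simp add: abs_mult)
    moreover have "\<bar>e * (p / (1 + p * x))\<bar> = e * (p / (1 + p * x))" using e q assms by (simp add: add_pos_pos)
    ultimately show ?thesis using abs_triangle_ineq4[of "- l * e * (1 - L)" "e * (p / (1 + p * x))"] by linarith
  qed
  also have "\<dots> \<le> l * e * (1 + p * x) + e * p"
  proof (rule add_mono)
    have "\<bar>1 - L\<bar> \<le> 1 + p * x" using L0 L1 by (simp add: abs_if)
    then show "l * e * \<bar>1 - L\<bar> \<le> l * e * (1 + p * x)" using e assms by (intro mult_left_mono) auto
    show "e * (p / (1 + p * x)) \<le> e * p" using mult_left_mono[OF q(2), of e] e by simp
  qed
  also have "\<dots> = (1 + p / l) * (l * e) + p * (l * e * x)" using assms by (simp add: field_simps)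
  finally show ?thesis unfolding e_def L_def by (simp add: mult.commute)
qed

lemma D_integral:
  fixes l p :: real assumes lp: "l > 0" "p > 0"
    and int1: "integrable lborel (exponential_density l)"
    and int2: "integrable lborel (\<lambda>x. exponential_density l x * x)"
  shows "set_integrable lborel {0<..} (\<lambda>x. - l * exp (- l * x) * (1 - ln (1 + p * x)) - exp (- l * x) * (p / (1 + p * x)))"
    and "(LINT x:{0<..}|lborel. - l * exp (- l * x) * (1 - ln (1 + p * x)) - exp (- l * x) * (p / (1 + p * x))) = -1"
proof -
  let ?D = "\<lambda>x. - l * exp (- l * x) * (1 - ln (1 + p * x)) - exp (- l * x) * (p / (1 + p * x))"
  let ?G = "\<lambda>x. exp (- l * x) * (1 - ln (1 + p * x))"
  show si: "set_integrable lborel {0<..} ?D"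
    unfolding set_integrable_def
  proof (rule Bochner_Integration.integrable_bound)
    show "integrable lborel (\<lambda>x. (1 + p / l) * exponential_density l x + p * (exponential_density l x * x))"
      using int1 int2 by auto
    show "(\<lambda>x. indicator {0<..} x *\<^sub>R ?D x) \<in> borel_measurable lborel" by measurable
    show "AE x in lborel. norm (indicator {0<..} x *\<^sub>R ?D x)
        \<le> norm ((1 + p / l) * exponential_density l x + p * (exponential_density l x * x))"
    proof (rule AE_I2)
      fix x :: real
      show "norm (indicator {0<..} x *\<^sub>R ?D x)
        \<le> norm ((1 + p / l) * exponential_density l x + p * (exponential_density l x * x))"
      proof (cases "x > 0")
        case True
        have "norm (indicator {0<..} x *\<^sub>R ?D x) = \<bar>?D x\<bar>" using True by simp
        also have "\<dots> \<le> (1 + p / l) * (l * exp (- x * l)) + p * (l * exp (- x * l) * x)"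
          by (rule D_bound[OF lp True])
        also have "\<dots> \<le> norm ((1 + p / l) * exponential_density l x + p * (exponential_density l x * x))"
          using True apply (simp add: exponential_density_def) by (rule abs_ge_self)
        finally show ?thesis .
      qed simp
    qed
  qed
  have "(LBINT x=0..\<infinity>. ?D x) = 0 - 1"
  proof (rule interval_integral_FTC_integrable)
    show "(0::ereal) < \<infinity>" by simp
    fix x :: real assume "0 < ereal x" "ereal x < \<infinity>"
    then have x: "x > 0" by (simp add: zero_ereal_def)
    have px: "1 + p * x > 0" using lp x by (smt (verit) mult_pos_pos)
    then have "(?G has_real_derivative ?D x) (at x)"
      using lp x by (auto intro!: derivative_eq_intros simp: field_simps)
    then show "(?G has_vector_derivative ?D x) (at x)"
      by (simp add: has_real_derivative_iff_has_vector_derivative)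
    show "isCont ?D x" using lp x px by (auto intro!: continuous_intros)
  next
    show "set_integrable lborel (einterval 0 \<infinity>) ?D" using si by (simp add: einterval_0_inf)
    show "((?G \<circ> real_of_ereal) \<longlongrightarrow> 1) (at_right 0)"
      unfolding zero_ereal_def ereal_tendsto_simps1 using lp by real_asymp
    show "((?G \<circ> real_of_ereal) \<longlongrightarrow> 0) (at_left \<infinity>)"
      unfolding ereal_tendsto_simps1 using lp by real_asymp
  qed
  then show "(LINT x:{0<..}|lborel. ?D x) = -1"
    by (simp add: interval_lebesgue_integral_def einterval_0_inf)
qed


lemma E1_eq:
  fixes l p :: real assumes lp: "l > 0" "p > 0"
  shows "(LINT t:{l/p..}|lborel. exp (- t) / t)
     = exp (- (l / p)) * p * (\<integral>x. indicator {0<..} x * (exp (- l * x) / (1 + p * x)) \<partial>lborel)"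
proof -
  have "(LINT t:{l/p..}|lborel. exp (- t) / t) = (\<integral>t. indicator {l/p..} t * (exp (- t) / t) \<partial>lborel)"
    by (simp add: set_lebesgue_integral_def)
  also have "\<dots> = \<bar>l\<bar> *\<^sub>R (\<integral>x. indicator {l/p..} (l/p + l * x) * (exp (- (l/p + l * x)) / (l/p + l * x)) \<partial>lborel)"
    using lp by (intro lborel_integral_real_affine) simp
  also have "(\<integral>x. indicator {l/p..} (l/p + l * x) * (exp (- (l/p + l * x)) / (l/p + l * x)) \<partial>lborel)
      = (\<integral>x. exp (- (l / p)) * p / l * (indicator {0<..} x * (exp (- l * x) / (1 + p * x))) \<partial>lborel)"
  proof (rule integral_cong_AE)
    show "AE x in lborel. indicator {l/p..} (l/p + l * x) * (exp (- (l/p + l * x)) / (l/p + l * x))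
        = exp (- (l / p)) * p / l * (indicator {0<..} x * (exp (- l * x) / (1 + p * x)))"
      using AE_lborel_singleton[of 0]
    proof eventually_elim
      case (elim x)
      show ?case
      proof (cases "x > 0")
        case True
        have px: "1 + p * x > 0" using lp True by (smt (verit) mult_pos_pos)
        have "l/p + l * x = l * (1 + p * x) / p" using lp by (simp add: field_simps)
        moreover have "l / p \<le> l / p + l * x" using lp True by simp
        ultimately have d: "l/p + l * x = l * (1 + p * x) / p" and ind: "l / p \<le> l / p + l * x" by auto
        have e: "exp (- (l/p + l * x)) = exp (- (l/p)) * exp (- l * x)"
          by (simp add: exp_add[symmetric])
        have "exp (- (l/p + l * x)) / (l/p + l * x) = exp (- (l/p)) * exp (- l * x) / (l * (1 + p * x) / p)"
          by (subst e, subst d, rule refl)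
        also have "\<dots> = exp (- (l / p)) * p / l * (exp (- l * x) / (1 + p * x))"
          using lp px by (simp add: field_simps)
        finally show ?thesis using ind True by simp
      next
        case False
        then have "x < 0" using elim by simp
        then have "l/p + l * x < l/p" using lp by (simp add: mult_pos_neg)
        then show ?thesis using False by simp
      qed
    qed
  qed measurable
  also have "\<dots> = exp (- (l / p)) * p / l * (\<integral>x. indicator {0<..} x * (exp (- l * x) / (1 + p * x)) \<partial>lborel)"
    by (rule integral_mult_right_zero)
  finally show ?thesis using lp by simp
qed

lemma E_integrable:
  fixes l p :: real assumes lp: "l > 0" "p > 0"
    and int1: "integrable lborel (exponential_density l)"
  shows "integrable lborel (\<lambda>x. indicator {0<..} x * (exp (- l * x) / (1 + p * x)))"
proof (rule Bochner_Integration.integrable_bound)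
  show "integrable lborel (\<lambda>x. exponential_density l x / l)" using int1 by auto
  show "(\<lambda>x. indicator {0<..} x * (exp (- l * x) / (1 + p * x))) \<in> borel_measurable lborel" by measurable
  show "AE x in lborel. norm (indicator {0<..} x * (exp (- l * x) / (1 + p * x))) \<le> norm (exponential_density l x / l)"
  proof (rule AE_I2)
    fix x :: real
    show "norm (indicator {0<..} x * (exp (- l * x) / (1 + p * x))) \<le> norm (exponential_density l x / l)"
    proof (cases "x > 0")
      case True
      have px: "1 + p * x \<ge> 1" using lp True by simp
      have "exp (- l * x) / (1 + p * x) \<le> exp (- l * x)"
      proof -
        have "0 < 1 + p * x" using px by simp
        then show ?thesis using divide_left_mono[OF px, of "exp (- l * x)"] by simp
      qed
      then show ?thesis using True px lp by (simp add: exponential_density_def mult.commute)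
    qed simp
  qed
qed


lemma ln_ge_aux: fixes u :: real assumes "u > 0" shows "1 - 1 / u \<le> ln u"
  using ln_le_minus_one[of "1/u"] assms by (simp add: ln_div)

lemma ln_strict_aux: fixes y :: real assumes y: "y > 0" shows "y / (1 + y) < ln (1 + y)"
proof -
  have a: "1 - 1 / (1 + y/2) \<le> ln (1 + y/2)" using y by (intro ln_ge_aux) simp
  have b: "1 - 1 / ((1 + y) / (1 + y/2)) \<le> ln ((1 + y) / (1 + y/2))" using y by (intro ln_ge_aux) simp
  have c: "ln (1 + y) = ln (1 + y/2) + ln ((1 + y) / (1 + y/2))"
    using y by (simp add: ln_div)
  have d: "1 - 1 / (1 + y/2) = (y/2) / (1 + y/2)" using y by (simp add: field_simps)
  have e: "1 - 1 / ((1 + y) / (1 + y/2)) = (y/2) / (1 + y)" using y by (simp add: field_simps)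
  have f: "(y/2) / (1 + y) < (y/2) / (1 + y/2)" using y by (intro divide_strict_left_mono) auto
  have "y / (1 + y) = (y/2) / (1 + y) + (y/2) / (1 + y)" by (metis add_divide_distrib field_sum_of_halves)
  also have "\<dots> < (y/2) / (1 + y/2) + (y/2) / (1 + y)" using f by simp
  also have "\<dots> \<le> ln (1 + y)" using a b c d e by simp
  finally show ?thesis .
qed

lemma part1:
  fixes l p :: real and M :: "'a measure" and X :: "'a \<Rightarrow> real"
  assumes lp: "l > 0" "p > 0" and PS: "prob_space M"
    and D: "distributed M lborel X (exponential_density l)"
  shows "integral\<^sup>L M (\<lambda>\<omega>. ln (X \<omega> * p + 1) - X \<omega> * p / (X \<omega> * p + 1)) = fKL l p"
    and "fKL l p > 0"
proof -
  define g where "g x = ln (x * p + 1) - x * p / (x * p + 1)" for x :: real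
  define Dd where "Dd x = - l * exp (- l * x) * (1 - ln (1 + p * x)) - exp (- l * x) * (p / (1 + p * x))" for x :: real
  define K where "K x = indicator {0<..} x * (exp (- l * x) / (1 + p * x))" for x :: real
  interpret prob_space M by (rule PS)
  have nn: "\<And>x. 0 \<le> exponential_density l x" using lp by (simp add: exponential_density_nonneg)
  have int1: "integrable lborel (exponential_density l)"
    using distributed_integrable[OF D, of "\<lambda>_. 1"] nn by simp
  have int2: "integrable lborel (\<lambda>x. exponential_density l x * x)"
    using prob_space.erlang_ith_moment_integrable[OF PS lp(1) D, of 1] distributed_integrable[OF D, of "\<lambda>x. x"] nn
    by simp
  have iD: "integrable lborel (\<lambda>x. indicator {0<..} x * Dd x)"
    using D_integral(1)[OF lp int1 int2] unfolding set_integrable_def Dd_def by simp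
  have vD: "(\<integral>x. indicator {0<..} x * Dd x \<partial>lborel) = -1"
    using D_integral(2)[OF lp int1 int2] unfolding set_lebesgue_integral_def Dd_def by simp
  have iK: "integrable lborel K" using E_integrable[OF lp int1] unfolding K_def .
  have eq: "exponential_density l x * g x = indicator {0<..} x * Dd x + (p + l) * K x" for x
  proof (cases "x > 0")
    case True
    have px: "1 + p * x > 0" using lp True by (smt (verit) mult_pos_pos)
    define u where "u = 1 + p * x"
    define e where "e = exp (- l * x)"
    define L where "L = ln u"
    have u: "u > 0" using px u_def by simp
    have xp: "x * p = u - 1" unfolding u_def by simp
    have "exponential_density l x * g x = l * e * (L - (u - 1) / u)"
      using True unfolding g_def e_def L_def exponential_density_def xp by (simp add: mult.commute)
    also have "\<dots> = - l * e * (1 - L) - e * (p / u) + (p + l) * (e / u)"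
      using u by (simp add: field_simps)
    also have "\<dots> = indicator {0<..} x * Dd x + (p + l) * K x"
      using True unfolding Dd_def K_def e_def L_def u_def by simp
    finally show ?thesis .
  next
    case False
    then show ?thesis unfolding g_def Dd_def K_def
      by (cases "x = 0") (auto simp: exponential_density_def)
  qed
  have iF: "integrable lborel (\<lambda>x. indicator {0<..} x * Dd x + (p + l) * K x)"
    using iD iK by auto
  have vF: "(\<integral>x. indicator {0<..} x * Dd x + (p + l) * K x \<partial>lborel) = -1 + (p + l) * integral\<^sup>L lborel K"
    using iD iK vD by (simp add: Bochner_Integration.integral_add)
  have M1: "integral\<^sup>L M (\<lambda>\<omega>. g (X \<omega>)) = (\<integral>x. exponential_density l x * g x \<partial>lborel)"
    by (rule distributed_integral[OF D, symmetric]) (auto simp: g_def nn)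
  have E1: "(LINT t:{l/p..}|lborel. exp (- t) / t) = exp (- (l / p)) * p * integral\<^sup>L lborel K"
    using E1_eq[OF lp] unfolding K_def .
  have fK: "fKL l p = -1 + (p + l) * integral\<^sup>L lborel K"
    unfolding fKL_def Ei_def using E1 lp by (simp add: exp_minus field_simps)
  show "integral\<^sup>L M (\<lambda>\<omega>. ln (X \<omega> * p + 1) - X \<omega> * p / (X \<omega> * p + 1)) = fKL l p"
    using M1 eq vF fK unfolding g_def by simp
  have pos: "x > 0 \<Longrightarrow> indicator {0<..} x * Dd x + (p + l) * K x > 0" for x
  proof -
    assume x: "x > 0"
    have "g x > 0" using ln_strict_aux[of "x * p"] x lp unfolding g_def by (simp add: add.commute)
    then have "exponential_density l x * g x > 0" using x lp by (simp add: exponential_density_def)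
    then show ?thesis using eq by simp
  qed
  have nonneg: "0 \<le> indicator {0<..} x * Dd x + (p + l) * K x" for x
    using pos[of x] unfolding K_def by (cases "x > 0") auto
  have "(\<integral>x. indicator {0<..} x * Dd x + (p + l) * K x \<partial>lborel) \<noteq> 0"
  proof
    assume "(\<integral>x. indicator {0<..} x * Dd x + (p + l) * K x \<partial>lborel) = 0"
    then have "AE x in lborel. indicator {0<..} x * Dd x + (p + l) * K x = 0"
      using integral_nonneg_eq_0_iff_AE[OF iF] nonneg by simp
    moreover have "AE x in lborel. indicator {0<..} x * Dd x + (p + l) * K x = 0 \<longrightarrow> x \<le> 0"
      using pos by (intro AE_I2) (metis less_irrefl not_le)
    ultimately have "AE x in lborel. (x::real) \<le> 0" by eventually_elim blast
    then have "emeasure lborel {0::real<..} = 0"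
      by (subst (asm) AE_iff_measurable[of "{0<..}"]) auto
    moreover have "emeasure lborel {0<..(1::real)} \<le> emeasure lborel {0::real<..}"
      by (intro emeasure_mono) auto
    ultimately show False by simp
  qed
  moreover have "0 \<le> (\<integral>x. indicator {0<..} x * Dd x + (p + l) * K x \<partial>lborel)"
    using nonneg by (intro Bochner_Integration.integral_nonneg) auto
  ultimately show "fKL l p > 0" using vF fK by simp
qed

lemma convex_aux:
  fixes A B s T :: real assumes "A > 0" "0 < s" "s < T"
  shows "A * s\<^sup>2 - B * s < (s / T) * (A * T\<^sup>2 - B * T)"
proof -
  have T: "T > 0" using assms by simp
  have "(s / T) * (A * T\<^sup>2 - B * T) = A * s * T - B * s" using T by (simp add: field_simps power2_eq_square)
  moreover have "A * s\<^sup>2 < A * s * T" using assms by (simp add: power2_eq_square)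
  ultimately show ?thesis by simp
qed

lemma aux_alg: fixes k c b h :: real assumes "k \<noteq> 0" "c \<noteq> 0"
  shows "k * b * (- h / (2 * k * c)) = (- h) * (b / (2 * c))"
  using assms by (simp add: field_simps)

lemma key:
  fixes A B k S :: real
  assumes A: "A > 0" and k: "k > 0" and S: "S > 0"
    and ex: "\<exists>L1. is_arg_max (\<lambda>L. k * (A * L - B * sqrt L)) (\<lambda>L. 0 < L \<and> L \<le> S) L1"
  shows "is_arg_max (\<lambda>L. k * (A * L - B * sqrt L)) (\<lambda>L. 0 < L \<and> L \<le> S) S
     \<and> (\<forall>L1. is_arg_max (\<lambda>L. k * (A * L - B * sqrt L)) (\<lambda>L. 0 < L \<and> L \<le> S) L1 \<longrightarrow> L1 = S)"
proof -
  define h where "h L = k * (A * L - B * sqrt L)" for L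
  define T where "T = sqrt S"
  have T: "T > 0" "T\<^sup>2 = S" using S unfolding T_def by auto
  have hs: "h L = k * (A * (sqrt L)\<^sup>2 - B * sqrt L)" if "L \<ge> 0" for L
    using that unfolding h_def by simp
  have hT: "h S = k * (A * T\<^sup>2 - B * T)" using hs[of S] S unfolding T_def by simp
  have lt: "h L < (sqrt L / T) * h S" if "0 < L" "L < S" for L
  proof -
    have "sqrt L < T" using that unfolding T_def by simp
    then have "A * (sqrt L)\<^sup>2 - B * sqrt L < (sqrt L / T) * (A * T\<^sup>2 - B * T)"
      using convex_aux[OF A, of "sqrt L" T B] that by simp
    then have lt1: "k * (A * (sqrt L)\<^sup>2 - B * sqrt L) < k * ((sqrt L / T) * (A * T\<^sup>2 - B * T))"
      using k by (rule mult_strict_left_mono)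
    have eq2: "k * ((sqrt L / T) * (A * T\<^sup>2 - B * T)) = (sqrt L / T) * h S"
      unfolding hT by (rule mult.left_commute)
    have e1: "h L = k * (A * (sqrt L)\<^sup>2 - B * sqrt L)" using hs that by simp
    show ?thesis unfolding e1 using less_le_trans[OF lt1 eq_refl[OF eq2]] .
  qed
  obtain L1 where L1: "is_arg_max h (\<lambda>L. 0 < L \<and> L \<le> S) L1" using ex unfolding h_def by blast
  have L1f: "0 < L1" "L1 \<le> S" and L1m: "\<And>y. 0 < y \<Longrightarrow> y \<le> S \<Longrightarrow> h y \<le> h L1"
    using L1 unfolding is_arg_max_def by (auto simp: not_less)
  have hS0: "h S \<ge> 0"
  proof (rule ccontr)
    assume neg: "\<not> h S \<ge> 0"
    have hL1: "h L1 < 0"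
    proof (cases "L1 = S")
      case False
      then have "h L1 < (sqrt L1 / T) * h S" using lt L1f by simp
      moreover have "(sqrt L1 / T) * h S < 0" 
      proof -
        have "sqrt L1 / T > 0" using L1f T by simp
        moreover have "h S < 0" using neg by simp
        ultimately show ?thesis by (rule mult_pos_neg)
      qed
      ultimately show ?thesis by simp
    qed (use neg in simp)
    define t where "t = min T (- h L1 / (2 * k * (\<bar>B\<bar> + 1)))"
    have "2 * k * (\<bar>B\<bar> + 1) > 0" using k by (simp add: add_pos_nonneg)
    then have "- h L1 / (2 * k * (\<bar>B\<bar> + 1)) > 0" using hL1 by (intro divide_pos_pos) simp_all
    then have t0: "t > 0" unfolding t_def using T by simp
    have tT: "t \<le> T" unfolding t_def by simp
    have tb: "t \<le> - h L1 / (2 * k * (\<bar>B\<bar> + 1))" unfolding t_def by simp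
    have "t\<^sup>2 \<le> S" using tT t0 T by (metis power_mono less_imp_le)
    then have "h (t\<^sup>2) \<le> h L1" using L1m t0 by simp
    moreover have "h (t\<^sup>2) > h L1"
    proof -
      have "h (t\<^sup>2) = k * (A * t\<^sup>2 - B * t)" using hs[of "t\<^sup>2"] t0 by simp
      also have "\<dots> \<ge> - k * \<bar>B\<bar> * t"
      proof -
        have "B * t \<le> \<bar>B\<bar> * t" using t0 by (intro mult_right_mono) auto
        moreover have "A * t\<^sup>2 \<ge> 0" using A by simp
        ultimately have "A * t\<^sup>2 - B * t \<ge> - \<bar>B\<bar> * t" by linarith
        then have "k * (- \<bar>B\<bar> * t) \<le> k * (A * t\<^sup>2 - B * t)" using k by (intro mult_left_mono) auto
        then show ?thesis by simp
      qed
      finally have a: "h (t\<^sup>2) \<ge> - k * \<bar>B\<bar> * t" .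
      have "k * \<bar>B\<bar> * t \<le> k * \<bar>B\<bar> * (- h L1 / (2 * k * (\<bar>B\<bar> + 1)))"
        using tb k by (intro mult_left_mono) auto
      also have "\<dots> = (- h L1) * (\<bar>B\<bar> / (2 * (\<bar>B\<bar> + 1)))" 
      proof -
        have "\<bar>B\<bar> + 1 \<noteq> 0" by (simp add: add_nonneg_pos)
        then show ?thesis using k aux_alg[of k "\<bar>B\<bar> + 1" "\<bar>B\<bar>" "h L1"] by simp
      qed
      also have "\<dots> < (- h L1) * 1"
      proof (rule mult_strict_left_mono)
        show "\<bar>B\<bar> / (2 * (\<bar>B\<bar> + 1)) < 1" by (simp add: divide_less_eq)
        show "0 < - h L1" using hL1 by simp
      qed
      finally show ?thesis using a by simp
    qed
    ultimately show False by simp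
  qed
  have strict: "h L < h S" if "0 < L" "L < S" for L
  proof -
    have "sqrt L / T \<le> 1" using that T unfolding T_def by simp
    then have "(sqrt L / T) * h S \<le> h S" using hS0 mult_right_mono[of "sqrt L / T" 1 "h S"] by simp
    then show ?thesis using lt[OF that] by simp
  qed
  have "is_arg_max h (\<lambda>L. 0 < L \<and> L \<le> S) S"
    unfolding is_arg_max_def
  proof (rule conjI)
    show "0 < S \<and> S \<le> S" using S by simp
    show "\<not> (\<exists>y. (0 < y \<and> y \<le> S) \<and> h S < h y)"
    proof
    assume "\<exists>y. (0 < y \<and> y \<le> S) \<and> h S < h y"
    then obtain y where "0 < y" "y \<le> S" "h S < h y" by blast
    then show False using strict[of y] by (cases "y = S") auto
    qed
  qed
  moreover have "\<forall>L1. is_arg_max h (\<lambda>L. 0 < L \<and> L \<le> S) L1 \<longrightarrow> L1 = S"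
  proof (intro allI impI)
    fix L2 assume "is_arg_max h (\<lambda>L. 0 < L \<and> L \<le> S) L2"
    then have "0 < L2" "L2 \<le> S" "\<not> h S > h L2" using S unfolding is_arg_max_def by auto
    then show "L2 = S" using strict[of L2] by fastforce
  qed
  ultimately show ?thesis unfolding h_def by simp
qed

lemma feasible_iff:
  assumes "fKL lam Pa > 0" "Pa > 0"
  shows "feasible lam eps Lmax L Pa \<longleftrightarrow> 0 < L \<and> L \<le> Lstar lam eps Lmax Pa"
  using assms unfolding feasible_def Lstar_def by (auto simp: pos_le_divide_eq mult.commute)

lemma Lstar_pos:
  assumes "fKL lam Pa > 0" "eps > 0" "Lmax > 0"
  shows "Lstar lam eps Lmax Pa > 0"
  using assms unfolding Lstar_def by simp

lemma obj_eq:
  fixes g d L Pa :: real assumes "L > 0"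
  shows "obj g d L Pa = (1 - d) * (log 2 (1 + Pa * g) * L
     - (sqrt (1 - 1 / (1 + Pa * g)\<^sup>2) * Qinv d / ln 2) * sqrt L)"
proof -
  define c where "c = 1 - 1 / (1 + Pa * g)\<^sup>2"
  have s: "sqrt ((1 / L) * c) = sqrt c / sqrt L" by (simp add: real_sqrt_mult real_sqrt_divide)
  have e: "L * sqrt ((1 / L) * c) = sqrt L * sqrt c"
    unfolding s using assms by (metis real_div_sqrt mult.commute times_divide_eq_right less_imp_le)
  have "obj g d L Pa = (1 - d) * (log 2 (1 + Pa * g) * L - (L * sqrt ((1 / L) * c)) * Qinv d / ln 2)"
    unfolding obj_def Rate_def c_def[symmetric] by (simp add: algebra_simps)
  also have "\<dots> = (1 - d) * (log 2 (1 + Pa * g) * L - (sqrt c * Qinv d / ln 2) * sqrt L)"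
    unfolding e by (simp add: algebra_simps)
  finally show ?thesis unfolding c_def .
qed

lemma is_arg_max_cong':
  assumes "\<And>y. P y \<longleftrightarrow> Q y" "\<And>y. Q y \<Longrightarrow> f y = f' y"
  shows "is_arg_max f P x \<longleftrightarrow> is_arg_max f' Q x"
  using assms unfolding is_arg_max_def by auto

lemma slice:
  fixes lam eps Lmax d g Pa :: real
  assumes "eps > 0" "Lmax > 0" "0 < d" "d < 0.5" "g > 0" "Pa > 0" and f: "fKL lam Pa > 0"
    and ex: "\<exists>L1. is_arg_max (\<lambda>L. obj g d L Pa) (\<lambda>L. feasible lam eps Lmax L Pa) L1"
  shows "is_arg_max (\<lambda>L. obj g d L Pa) (\<lambda>L. feasible lam eps Lmax L Pa) (Lstar lam eps Lmax Pa)
     \<and> (\<forall>L1. is_arg_max (\<lambda>L. obj g d L Pa) (\<lambda>L. feasible lam eps Lmax L Pa) L1 \<longrightarrow> L1 = Lstar lam eps Lmax Pa)"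
proof -
  define S where "S = Lstar lam eps Lmax Pa"
  define A where "A = log 2 (1 + Pa * g)"
  define B where "B = sqrt (1 - 1 / (1 + Pa * g)\<^sup>2) * Qinv d / ln 2"
  define k where "k = 1 - d"
  have S: "S > 0" unfolding S_def using Lstar_pos[OF f assms(1,2)] .
  have A: "A > 0" unfolding A_def using mult_pos_pos[OF assms(6) assms(5)] by simp
  have k: "k > 0" unfolding k_def using assms by simp
  have cong: "is_arg_max (\<lambda>L. obj g d L Pa) (\<lambda>L. feasible lam eps Lmax L Pa) x
      \<longleftrightarrow> is_arg_max (\<lambda>L. k * (A * L - B * sqrt L)) (\<lambda>L. 0 < L \<and> L \<le> S) x" for x
    by (rule is_arg_max_cong') (auto simp: feasible_iff[OF f assms(6)] S_def obj_eq A_def B_def k_def)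
  have "\<exists>L1. is_arg_max (\<lambda>L. k * (A * L - B * sqrt L)) (\<lambda>L. 0 < L \<and> L \<le> S) L1"
    using ex cong by blast
  from key[OF A k S this] show ?thesis unfolding cong S_def .
qed

theorem corollary1:
  fixes lam eps Lmax d g :: real
    and M :: "'a measure" and X :: "'a \<Rightarrow> real"
  assumes "lam > 0" and "eps > 0" and "Lmax > 0"
    and "0 < d" and "d < 0.5" and "g > 0"
    and "prob_space M" and "distributed M lborel X (exponential_density lam)"
  shows
    "(\<forall>Pa>0. integral\<^sup>L M (\<lambda>\<omega>. ln (X \<omega> * Pa + 1) - X \<omega> * Pa / (X \<omega> * Pa + 1))
                = fKL lam Pa)
   \<and> (\<forall>Pa>0. (\<exists>L1. is_arg_max (\<lambda>L. obj g d L Pa) (\<lambda>L. feasible lam eps Lmax L Pa) L1)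
          \<longrightarrow> is_arg_max (\<lambda>L. obj g d L Pa) (\<lambda>L. feasible lam eps Lmax L Pa)
                (Lstar lam eps Lmax Pa)
            \<and> (\<forall>L1. is_arg_max (\<lambda>L. obj g d L Pa) (\<lambda>L. feasible lam eps Lmax L Pa) L1
                    \<longrightarrow> L1 = Lstar lam eps Lmax Pa))
   \<and> (\<forall>L1 Pa. is_arg_max (\<lambda>(L, P). obj g d L P) (\<lambda>(L, P). feasible lam eps Lmax L P) (L1, Pa)
          \<longrightarrow> L1 = Lstar lam eps Lmax Pa
            \<and> is_arg_max (\<lambda>P. obj g d (Lstar lam eps Lmax P) P) (\<lambda>P. P > 0) Pa)"
proof (intro conjI allI impI)
  have fpos: "fKL lam P > 0" if "P > 0" for P
    using part1(2)[OF assms(1) that assms(7,8)] .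
  show "integral\<^sup>L M (\<lambda>\<omega>. ln (X \<omega> * Pa + 1) - X \<omega> * Pa / (X \<omega> * Pa + 1)) = fKL lam Pa"
    if "Pa > 0" for Pa
    using part1(1)[OF assms(1) that assms(7,8)] .
  show "is_arg_max (\<lambda>L. obj g d L Pa) (\<lambda>L. feasible lam eps Lmax L Pa) (Lstar lam eps Lmax Pa)"
    if "Pa > 0" "\<exists>L1. is_arg_max (\<lambda>L. obj g d L Pa) (\<lambda>L. feasible lam eps Lmax L Pa) L1" for Pa
    using slice[OF assms(2-6) that(1) fpos[OF that(1)] that(2)] by auto
  show "L1 = Lstar lam eps Lmax Pa"
    if "Pa > 0" "\<exists>L1. is_arg_max (\<lambda>L. obj g d L Pa) (\<lambda>L. feasible lam eps Lmax L Pa) L1"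
      "is_arg_max (\<lambda>L. obj g d L Pa) (\<lambda>L. feasible lam eps Lmax L Pa) L1" for Pa L1
    using slice[OF assms(2-6) that(1) fpos[OF that(1)] that(2)] that(3) by auto
  fix L1 Pa
  assume J: "is_arg_max (\<lambda>(L, P). obj g d L P) (\<lambda>(L, P). feasible lam eps Lmax L P) (L1, Pa)"
  have fe: "feasible lam eps Lmax L1 Pa"
    and nb: "\<And>L P. feasible lam eps Lmax L P \<Longrightarrow> obj g d L P \<le> obj g d L1 Pa"
    using J unfolding is_arg_max_def by (auto simp: not_less)
  have Pa: "Pa > 0" using fe unfolding feasible_def by simp
  have "is_arg_max (\<lambda>L. obj g d L Pa) (\<lambda>L. feasible lam eps Lmax L Pa) L1"
    using fe nb unfolding is_arg_max_def by (auto simp: not_less)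
  then have L1: "L1 = Lstar lam eps Lmax Pa"
    using slice[OF assms(2-6) Pa fpos[OF Pa]] by blast
  then show "L1 = Lstar lam eps Lmax Pa" .
  have "feasible lam eps Lmax (Lstar lam eps Lmax P) P" if "P > 0" for P
    using feasible_iff[OF fpos[OF that] that] Lstar_pos[OF fpos[OF that] assms(2,3)] by simp
  then show "is_arg_max (\<lambda>P. obj g d (Lstar lam eps Lmax P) P) (\<lambda>P. P > 0) Pa"
    using nb Pa L1 unfolding is_arg_max_def by (metis not_less)
qed

end
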